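(* Let $C$ be a coalgebra over a field $K$, and write the right socle of $C$ as $s(C^C)=\bigoplus_{j\in J}T_j$ with $T_j$ simple right subcomodules, and $C=\bigoplus_{j\in J}E(T_j)$ as right $C$-comodules, where $E(T_j)\subseteq C$ is an injective envelope of $T_j$. Let $J_0=\{j\in J\mid \mathrm{Rat}(E(T_j)^* )\neq 0\}$. If $C\cong\mathrm{Rat}(C^*_{C^*})$ as right $C^*$-modules, then ${}^{C}C\cong \mathrm{Rat}\big(\prod_{j\in J_0}E(T_j)^*\big)$, i.e. $C$ is isomorphic as a right $C^*$-module (left $C$-comodule) to the rational part of the right $C^*$-module $\prod_{j\in J_0}E(T_j)^*$.
   Context: $C^*$ is the dual algebra with convolution. $C$ is a right $C^*$-module via $c\cdot c^*=c^*(c_1)c_2$ (equivalently a left $C$-comodule, denoted ${}^CC$); $C^C$ denotes $C$ as a right comodule. A right comodule $M$ is a left $C^*$-module via $c^*\cdot m=m_0c^*(m_1)$ and $M^*$ is a right $C^*$-module via $(\alpha\cdot c^* )(m)=\alpha(c^*\cdot m)$. For a right $C^*$-module $N$, $\mathrm{Rat}(N)$ is the largest submodule whose action comes from a left $C$-comodule structure ($n\cdot c^*=c^*(n_{-1})n_0$). *)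

theory Defs
  imports Complex_Main "HOL-Library.Function_Algebras"
begin

text \<open>The coalgebra C is the whole carrier of a type 'c, a vector space over the
field 'k with scalar multiplication sc.  An element of a tensor product
V (x) W is represented by a finite list of pairs (v_i, w_i), standing for the sum of
the v_i (x) w_i.  Since we are over a field, elements of tensor products of vector
spaces are separated by the product functionals f (x) g (f, g linear functionals),
so equalities of tensors are expressed by testing against f (x) g (resp.
f (x) g (x) h for triple tensors).\<close>

definition dual :: "('k::field \<Rightarrow> 'c::ab_group_add \<Rightarrow> 'c) \<Rightarrow> ('c \<Rightarrow> 'k) set" where
  "dual sc = {f. (\<forall>x y. f (x + y) = f x + f y) \<and> (\<forall>a x. f (sc a x) = a * f x)}"

definition tev :: "('a \<Rightarrow> 'k::field) \<Rightarrow> ('b \<Rightarrow> 'k) \<Rightarrow> ('a \<times> 'b) list \<Rightarrow> 'k" where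
  "tev f g xs = (\<Sum>(x, y)\<leftarrow>xs. f x * g y)"

definition coalgebra ::
  "('k::field \<Rightarrow> 'c::ab_group_add \<Rightarrow> 'c) \<Rightarrow> ('c \<Rightarrow> ('c \<times> 'c) list) \<Rightarrow> ('c \<Rightarrow> 'k) \<Rightarrow> bool" where
  "coalgebra sc \<Delta> \<epsilon> \<longleftrightarrow>
     Vector_Spaces.vector_space sc \<and>
     \<epsilon> \<in> dual sc \<and>
     (\<forall>f\<in>dual sc. \<forall>g\<in>dual sc. \<forall>a b.
        tev f g (\<Delta> (a + b)) = tev f g (\<Delta> a) + tev f g (\<Delta> b)) \<and>
     (\<forall>f\<in>dual sc. \<forall>g\<in>dual sc. \<forall>k a.
        tev f g (\<Delta> (sc k a)) = k * tev f g (\<Delta> a)) \<and>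
     (\<forall>c. (\<Sum>(x, y)\<leftarrow>\<Delta> c. sc (\<epsilon> x) y) = c) \<and>
     (\<forall>c. (\<Sum>(x, y)\<leftarrow>\<Delta> c. sc (\<epsilon> y) x) = c) \<and>
     (\<forall>c. \<forall>f\<in>dual sc. \<forall>g\<in>dual sc. \<forall>h\<in>dual sc.
        (\<Sum>(x, y)\<leftarrow>\<Delta> c. f x * tev g h (\<Delta> y)) =
        (\<Sum>(x, y)\<leftarrow>\<Delta> c. tev f g (\<Delta> x) * h y))"

definition conv :: "('c \<Rightarrow> ('c \<times> 'c) list) \<Rightarrow> ('c \<Rightarrow> 'k::field) \<Rightarrow> ('c \<Rightarrow> 'k) \<Rightarrow> 'c \<Rightarrow> 'k" where
  "conv \<Delta> f g = (\<lambda>c. tev f g (\<Delta> c))"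

definition fscale :: "'k::field \<Rightarrow> ('c \<Rightarrow> 'k) \<Rightarrow> 'c \<Rightarrow> 'k" where
  "fscale a f = (\<lambda>x. a * f x)"

text \<open>C as a right C*-module: c . f = f(c1) c2 (i.e. the left comodule C).\<close>
definition C_ract :: "('k::field \<Rightarrow> 'c::ab_group_add \<Rightarrow> 'c) \<Rightarrow> ('c \<Rightarrow> ('c \<times> 'c) list)
    \<Rightarrow> 'c \<Rightarrow> ('c \<Rightarrow> 'k) \<Rightarrow> 'c" where
  "C_ract sc \<Delta> c f = (\<Sum>(x, y)\<leftarrow>\<Delta> c. sc (f x) y)"

definition subspace_of :: "('k::field \<Rightarrow> 'c::ab_group_add \<Rightarrow> 'c) \<Rightarrow> 'c set \<Rightarrow> bool" where
  "subspace_of sc D \<longleftrightarrow> 0 \<in> D \<and> (\<forall>x\<in>D. \<forall>y\<in>D. x + y \<in> D) \<and> (\<forall>a. \<forall>x\<in>D. sc a x \<in> D)"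

text \<open>D is a right subcomodule of C^C: a subspace with delta(D) contained in D (x) C.\<close>
definition rsubcomod :: "('k::field \<Rightarrow> 'c::ab_group_add \<Rightarrow> 'c) \<Rightarrow> ('c \<Rightarrow> ('c \<times> 'c) list)
    \<Rightarrow> 'c set \<Rightarrow> bool" where
  "rsubcomod sc \<Delta> D \<longleftrightarrow> subspace_of sc D \<and>
     (\<forall>d\<in>D. \<exists>xs. set (map fst xs) \<subseteq> D \<and>
        (\<forall>f\<in>dual sc. \<forall>g\<in>dual sc. tev f g xs = tev f g (\<Delta> d)))"

definition simple_rsubcomod :: "('k::field \<Rightarrow> 'c::ab_group_add \<Rightarrow> 'c) \<Rightarrow> ('c \<Rightarrow> ('c \<times> 'c) list)
    \<Rightarrow> 'c set \<Rightarrow> bool" where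
  "simple_rsubcomod sc \<Delta> D \<longleftrightarrow> rsubcomod sc \<Delta> D \<and> D \<noteq> {0} \<and>
     (\<forall>D'. rsubcomod sc \<Delta> D' \<and> D' \<subseteq> D \<longrightarrow> D' = {0} \<or> D' = D)"

definition rsocle :: "('k::field \<Rightarrow> 'c::ab_group_add \<Rightarrow> 'c) \<Rightarrow> ('c \<Rightarrow> ('c \<times> 'c) list) \<Rightarrow> 'c set" where
  "rsocle sc \<Delta> = {sum x F | F x. finite F \<and> (\<forall>D\<in>F. simple_rsubcomod sc \<Delta> D \<and> x D \<in> D)}"

definition internal_direct_sum :: "('k::field \<Rightarrow> 'c::ab_group_add \<Rightarrow> 'c) \<Rightarrow> 'j set
    \<Rightarrow> ('j \<Rightarrow> 'c set) \<Rightarrow> 'c set \<Rightarrow> bool" where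
  "internal_direct_sum sc J A S \<longleftrightarrow>
     (\<forall>j\<in>J. subspace_of sc (A j)) \<and>
     S = {sum x F | F x. finite F \<and> F \<subseteq> J \<and> (\<forall>j\<in>F. x j \<in> A j)} \<and>
     (\<forall>F x. finite F \<and> F \<subseteq> J \<and> (\<forall>j\<in>F. x j \<in> A j) \<and> sum x F = 0 \<longrightarrow> (\<forall>j\<in>F. x j = 0))"

definition essential_rsub :: "('k::field \<Rightarrow> 'c::ab_group_add \<Rightarrow> 'c) \<Rightarrow> ('c \<Rightarrow> ('c \<times> 'c) list)
    \<Rightarrow> 'c set \<Rightarrow> 'c set \<Rightarrow> bool" where
  "essential_rsub sc \<Delta> T E \<longleftrightarrow> rsubcomod sc \<Delta> T \<and> rsubcomod sc \<Delta> E \<and> T \<subseteq> E \<and>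
     (\<forall>D. rsubcomod sc \<Delta> D \<and> D \<subseteq> E \<and> D \<noteq> {0} \<longrightarrow> D \<inter> T \<noteq> {0})"

text \<open>E* for a subspace E of C: linear functionals on E, represented extensionally
(value 0 outside E).\<close>
definition Edual :: "('k::field \<Rightarrow> 'c::ab_group_add \<Rightarrow> 'c) \<Rightarrow> 'c set \<Rightarrow> ('c \<Rightarrow> 'k) set" where
  "Edual sc E = {\<alpha>. (\<forall>x\<in>E. \<forall>y\<in>E. \<alpha> (x + y) = \<alpha> x + \<alpha> y) \<and>
                    (\<forall>a. \<forall>x\<in>E. \<alpha> (sc a x) = a * \<alpha> x) \<and> (\<forall>x. x \<notin> E \<longrightarrow> \<alpha> x = 0)}"

text \<open>For a right subcomodule E, (alpha . f)(m) = alpha(f . m), where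
f . m = m0 f(m1) = c1 f(c2) for m = c.\<close>
definition Edual_act :: "('k::field \<Rightarrow> 'c::ab_group_add \<Rightarrow> 'c) \<Rightarrow> ('c \<Rightarrow> ('c \<times> 'c) list)
    \<Rightarrow> 'c set \<Rightarrow> ('c \<Rightarrow> 'k) \<Rightarrow> ('c \<Rightarrow> 'k) \<Rightarrow> 'c \<Rightarrow> 'k" where
  "Edual_act sc \<Delta> E \<alpha> f = (\<lambda>m. if m \<in> E then \<alpha> (\<Sum>(x, y)\<leftarrow>\<Delta> m. sc (f y) x) else 0)"

definition prod_dual :: "('k::field \<Rightarrow> 'c::ab_group_add \<Rightarrow> 'c) \<Rightarrow> ('j \<Rightarrow> 'c set) \<Rightarrow> 'j set
    \<Rightarrow> ('j \<Rightarrow> 'c \<Rightarrow> 'k) set" where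
  "prod_dual sc E J0 = {\<phi>. (\<forall>j\<in>J0. \<phi> j \<in> Edual sc (E j)) \<and> (\<forall>j. j \<notin> J0 \<longrightarrow> \<phi> j = 0)}"

definition pscale :: "'k::field \<Rightarrow> ('j \<Rightarrow> 'c \<Rightarrow> 'k) \<Rightarrow> 'j \<Rightarrow> 'c \<Rightarrow> 'k" where
  "pscale a \<phi> = (\<lambda>j x. a * \<phi> j x)"

definition prod_act :: "('k::field \<Rightarrow> 'c::ab_group_add \<Rightarrow> 'c) \<Rightarrow> ('c \<Rightarrow> ('c \<times> 'c) list)
    \<Rightarrow> ('j \<Rightarrow> 'c set) \<Rightarrow> ('j \<Rightarrow> 'c \<Rightarrow> 'k) \<Rightarrow> ('c \<Rightarrow> 'k) \<Rightarrow> 'j \<Rightarrow> 'c \<Rightarrow> 'k" where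
  "prod_act sc \<Delta> E \<phi> f = (\<lambda>j. Edual_act sc \<Delta> (E j) (\<phi> j) f)"

text \<open>A right C*-module is given by a carrier N in a type 'm with addition,
a K-scalar multiplication ms and an action act.  M is a submodule.\<close>
definition submod :: "('k::field \<Rightarrow> 'c::ab_group_add \<Rightarrow> 'c) \<Rightarrow> ('k \<Rightarrow> 'm::comm_monoid_add \<Rightarrow> 'm)
    \<Rightarrow> ('m \<Rightarrow> ('c \<Rightarrow> 'k) \<Rightarrow> 'm) \<Rightarrow> 'm set \<Rightarrow> bool" where
  "submod sc ms act M \<longleftrightarrow> 0 \<in> M \<and> (\<forall>x\<in>M. \<forall>y\<in>M. x + y \<in> M) \<and>
     (\<forall>a. \<forall>x\<in>M. ms a x \<in> M) \<and> (\<forall>x\<in>M. \<forall>f\<in>dual sc. act x f \<in> M)"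

text \<open>M is rational: the action of C* on M comes from a left C-comodule structure,
i.e. for each n in M there are finitely many c_i in C and n_i in M with
n . f = sum f(c_i) n_i for all f in C* (n_{-1} (x) n_0 = sum c_i (x) n_i).\<close>
definition rational_submod :: "('k::field \<Rightarrow> 'c::ab_group_add \<Rightarrow> 'c) \<Rightarrow> ('k \<Rightarrow> 'm::comm_monoid_add \<Rightarrow> 'm)
    \<Rightarrow> ('m \<Rightarrow> ('c \<Rightarrow> 'k) \<Rightarrow> 'm) \<Rightarrow> 'm set \<Rightarrow> bool" where
  "rational_submod sc ms act M \<longleftrightarrow> submod sc ms act M \<and>
     (\<forall>n\<in>M. \<exists>ps :: ('c \<times> 'm) list. set (map snd ps) \<subseteq> M \<and>
        (\<forall>f\<in>dual sc. act n f = (\<Sum>(c, m)\<leftarrow>ps. ms (f c) m)))"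

definition Rat :: "('k::field \<Rightarrow> 'c::ab_group_add \<Rightarrow> 'c) \<Rightarrow> ('k \<Rightarrow> 'm::comm_monoid_add \<Rightarrow> 'm)
    \<Rightarrow> ('m \<Rightarrow> ('c \<Rightarrow> 'k) \<Rightarrow> 'm) \<Rightarrow> 'm set \<Rightarrow> 'm set" where
  "Rat sc ms act N = {n. \<exists>M. M \<subseteq> N \<and> rational_submod sc ms act M \<and> n \<in> M}"

definition rmod_iso :: "('k::field \<Rightarrow> 'c::ab_group_add \<Rightarrow> 'c)
    \<Rightarrow> ('k \<Rightarrow> 'a::comm_monoid_add \<Rightarrow> 'a) \<Rightarrow> 'a set \<Rightarrow> ('a \<Rightarrow> ('c \<Rightarrow> 'k) \<Rightarrow> 'a)
    \<Rightarrow> ('k \<Rightarrow> 'b::comm_monoid_add \<Rightarrow> 'b) \<Rightarrow> 'b set \<Rightarrow> ('b \<Rightarrow> ('c \<Rightarrow> 'k) \<Rightarrow> 'b) \<Rightarrow> bool" where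
  "rmod_iso sc ms1 N1 act1 ms2 N2 act2 \<longleftrightarrow>
     (\<exists>\<psi>. bij_betw \<psi> N1 N2 \<and>
        (\<forall>x\<in>N1. \<forall>y\<in>N1. \<psi> (x + y) = \<psi> x + \<psi> y) \<and>
        (\<forall>a. \<forall>x\<in>N1. \<psi> (ms1 a x) = ms2 a (\<psi> x)) \<and>
        (\<forall>x\<in>N1. \<forall>f\<in>dual sc. \<psi> (act1 x f) = act2 (\<psi> x) f))"

end

theory Submission
  imports Defs
begin


lemma separate:
  assumes vs: "Vector_Spaces.vector_space (sc :: 'k::field \<Rightarrow> 'c::ab_group_add \<Rightarrow> 'c)" and v: "v \<noteq> 0"
  shows "\<exists>g\<in>dual sc. g v \<noteq> 0"
proof -
  interpret vector_space sc by (rule vs)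
  have ind: "independent {v}"
    using independent_insertI[of v "{}"] v by (simp add: span_empty)
  define B where "B = extend_basis {v}"
  have iB: "independent B" and vB: "v \<in> B" and sB: "span B = UNIV"
    using extend_basis_superset[OF ind] independent_extend_basis[OF ind] span_extend_basis[OF ind] B_def by auto
  define g where "g = (\<lambda>x. representation B x v)"
  have "g \<in> dual sc"
    unfolding dual_def g_def using representation_add[OF iB] representation_scale[OF iB] sB by auto
  moreover have "g v = 1" unfolding g_def using representation_basis[OF iB vB] by simp
  ultimately show ?thesis by force
qed

lemma dual_add: "g \<in> dual sc \<Longrightarrow> g (a + b) = g a + g b"
  unfolding dual_def by auto

lemma dual_zero: "g \<in> dual sc \<Longrightarrow> g 0 = 0"
  using dual_add[of g sc 0 0] add_cancel_right_right by (metis add_0)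

lemma dual_scale: "g \<in> dual sc \<Longrightarrow> g (sc k a) = k * g a"
  unfolding dual_def by auto

lemma dual_diff: "g \<in> dual sc \<Longrightarrow> g (a - b) = g a - g b"
  using dual_add[of g sc "a - b" b] by (simp add: algebra_simps)

lemma dual_sum: "g \<in> dual sc \<Longrightarrow> g (sum y G) = (\<Sum>j\<in>G. g (y j))"
  by (induction G rule: infinite_finite_induct) (auto simp: dual_zero dual_add)

lemma dual_lin_list: "g \<in> dual sc \<Longrightarrow> g (\<Sum>(x, y)\<leftarrow>xs. sc (f y) x) = tev g f xs"
proof (induction xs)
  case Nil thus ?case by (simp add: tev_def dual_zero)
next
  case (Cons p xs)
  obtain a b where p: "p = (a, b)" by (cases p)
  show ?case using Cons by (simp add: p tev_def dual_add dual_scale mult.commute)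
qed

lemma separate_eq:
  assumes vs: "Vector_Spaces.vector_space (sc :: 'k::field \<Rightarrow> 'c::ab_group_add \<Rightarrow> 'c)"
    and h: "\<forall>g\<in>dual sc. g a = g b"
  shows "a = b"
proof (rule ccontr)
  assume "a \<noteq> b"
  then obtain g where g: "g \<in> dual sc" "g (a - b) \<noteq> 0" using separate[OF vs, of "a - b"] by auto
  thus False using h dual_diff[OF g(1)] by auto
qed

lemma subspace_list:
  assumes "subspace_of sc D" "set (map fst xs) \<subseteq> D"
  shows "(\<Sum>(x, y)\<leftarrow>xs. sc (h y) x) \<in> D"
  using assms(2)
proof (induction xs)
  case Nil thus ?case using assms(1) by (simp add: subspace_of_def)
next
  case (Cons p xs)
  obtain a b where p: "p = (a, b)" by (cases p)
  show ?case using Cons assms(1) by (auto simp: p subspace_of_def)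
qed

lemma rat_list:
  assumes sub: "submod sc ms1 act1 M"
    and h0: "h 0 = 0" and hadd: "\<forall>x\<in>M. \<forall>y\<in>M. h (x + y) = h x + h y"
    and hs: "\<forall>a. \<forall>x\<in>M. h (ms1 a x) = ms2 a (h x)"
    and ps: "set (map snd ps) \<subseteq> M"
  shows "(\<Sum>(c, m)\<leftarrow>ps. ms1 (f c) m) \<in> M \<and>
         h (\<Sum>(c, m)\<leftarrow>ps. ms1 (f c) m) = (\<Sum>(c, m)\<leftarrow>ps. ms2 (f c) (h m))"
  using ps
proof (induction ps)
  case Nil thus ?case using sub h0 by (simp add: submod_def)
next
  case (Cons p ps)
  obtain a b where p: "p = (a, b)" by (cases p)
  have b: "b \<in> M" using Cons.prems p by auto
  have m1: "ms1 (f a) b \<in> M" using sub b by (simp add: submod_def)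
  from Cons have IH: "(\<Sum>(c, m)\<leftarrow>ps. ms1 (f c) m) \<in> M \<and>
         h (\<Sum>(c, m)\<leftarrow>ps. ms1 (f c) m) = (\<Sum>(c, m)\<leftarrow>ps. ms2 (f c) (h m))" by auto
  show ?case using IH m1 sub hadd hs b by (simp add: p submod_def)
qed

lemma rat_image:
  assumes rat: "rational_submod sc ms1 act1 M"
    and h0: "h 0 = 0" and hadd: "\<forall>x\<in>M. \<forall>y\<in>M. h (x + y) = h x + h y"
    and hs: "\<forall>a. \<forall>x\<in>M. h (ms1 a x) = ms2 a (h x)"
    and hact: "\<forall>x\<in>M. \<forall>f\<in>dual sc. h (act1 x f) = act2 (h x) f"
  shows "rational_submod sc ms2 act2 (h ` M)"
proof -
  have sub: "submod sc ms1 act1 M" using rat by (simp add: rational_submod_def)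
  have "submod sc ms2 act2 (h ` M)"
    unfolding submod_def
  proof (intro conjI ballI allI)
    show "0 \<in> h ` M" using sub h0 by (metis image_eqI submod_def)
    show "x + y \<in> h ` M" if "x \<in> h ` M" "y \<in> h ` M" for x y
      using that sub hadd by (auto simp: submod_def) (metis image_eqI)
    show "ms2 a x \<in> h ` M" if "x \<in> h ` M" for a x
      using that sub hs by (auto simp: submod_def) (metis image_eqI)
    show "act2 x f \<in> h ` M" if "x \<in> h ` M" "f \<in> dual sc" for x f
      using that sub hact by (auto simp: submod_def) (metis image_eqI)
  qed
  moreover have "\<exists>ps. set (map snd ps) \<subseteq> h ` M \<and>
        (\<forall>f\<in>dual sc. act2 n f = (\<Sum>(c, m)\<leftarrow>ps. ms2 (f c) m))" if n: "n \<in> h ` M" for n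
  proof -
    obtain m where m: "m \<in> M" "n = h m" using n by auto
    obtain ps where ps: "set (map snd ps) \<subseteq> M"
        "\<forall>f\<in>dual sc. act1 m f = (\<Sum>(c, m)\<leftarrow>ps. ms1 (f c) m)"
      using rat m(1) unfolding rational_submod_def by blast
    define qs where "qs = map (\<lambda>(c, m). (c, h m)) ps"
    have "set (map snd qs) \<subseteq> h ` M" using ps(1) unfolding qs_def by auto
    moreover have "act2 n f = (\<Sum>(c, m)\<leftarrow>qs. ms2 (f c) m)" if f: "f \<in> dual sc" for f
    proof -
      have "act2 n f = h (act1 m f)" using hact m f by simp
      also have "\<dots> = h (\<Sum>(c, m)\<leftarrow>ps. ms1 (f c) m)" using ps(2) f by simp
      also have "\<dots> = (\<Sum>(c, m)\<leftarrow>ps. ms2 (f c) (h m))"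
        using rat_list[OF sub h0 hadd hs ps(1)] by blast
      also have "\<dots> = (\<Sum>(c, m)\<leftarrow>qs. ms2 (f c) m)"
        unfolding qs_def by (simp add: comp_def split_def)
      finally show ?thesis .
    qed
    ultimately show ?thesis by blast
  qed
  ultimately show ?thesis unfolding rational_submod_def by blast
qed



locale cs =
  fixes sc :: "'k::field \<Rightarrow> 'c::ab_group_add \<Rightarrow> 'c"
    and \<Delta> :: "'c \<Rightarrow> ('c \<times> 'c) list"
    and \<epsilon> :: "'c \<Rightarrow> 'k"
    and J :: "'j set"
    and E :: "'j \<Rightarrow> 'c set"
    and J0 :: "'j set"
  assumes coalg: "coalgebra sc \<Delta> \<epsilon>"
    and Esub: "\<forall>j\<in>J. rsubcomod sc \<Delta> (E j)"
    and Cdec: "internal_direct_sum sc J E UNIV"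
    and J0J: "J0 \<subseteq> J"
    and J0R: "\<forall>j\<in>J. j \<notin> J0 \<longrightarrow> Rat sc fscale (Edual_act sc \<Delta> (E j)) (Edual sc (E j)) = {0}"
begin

lemma Cind: "finite F \<Longrightarrow> F \<subseteq> J \<Longrightarrow> (\<forall>j\<in>F. x j \<in> E j) \<Longrightarrow> sum x F = 0 \<Longrightarrow> (\<forall>j\<in>F. x j = 0)"
proof -
  have "\<forall>F x. finite F \<and> F \<subseteq> J \<and> (\<forall>j\<in>F. x j \<in> E j) \<and> sum x F = 0 \<longrightarrow> (\<forall>j\<in>F. x j = 0)"
    using Cdec unfolding internal_direct_sum_def by (rule conjunct2[OF conjunct2])
  thus "finite F \<Longrightarrow> F \<subseteq> J \<Longrightarrow> (\<forall>j\<in>F. x j \<in> E j) \<Longrightarrow> sum x F = 0 \<Longrightarrow> (\<forall>j\<in>F. x j = 0)"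
    by blast
qed

lemma vs: "Vector_Spaces.vector_space sc"
  using coalg by (simp add: coalgebra_def)

lemma sc_neg: "sc (-1) x = - x"
proof -
  interpret vector_space sc by (rule vs)
  show ?thesis by simp
qed

lemma Esp: "j \<in> J \<Longrightarrow> subspace_of sc (E j)"
  using Esub by (simp add: rsubcomod_def)

lemma E0: "j \<in> J \<Longrightarrow> 0 \<in> E j"
  using Esp by (simp add: subspace_of_def)
lemma Eadd: "j \<in> J \<Longrightarrow> x \<in> E j \<Longrightarrow> y \<in> E j \<Longrightarrow> x + y \<in> E j"
  using Esp by (simp add: subspace_of_def)
lemma Escale: "j \<in> J \<Longrightarrow> x \<in> E j \<Longrightarrow> sc a x \<in> E j"
  using Esp by (simp add: subspace_of_def)
lemma Ediff: "j \<in> J \<Longrightarrow> x \<in> E j \<Longrightarrow> y \<in> E j \<Longrightarrow> x - y \<in> E j"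
  using Eadd[of j x "sc (-1) y"] Escale[of j y "-1"] sc_neg[of y] by simp

lemma tevD_add: "f \<in> dual sc \<Longrightarrow> g \<in> dual sc \<Longrightarrow> tev f g (\<Delta> (a + b)) = tev f g (\<Delta> a) + tev f g (\<Delta> b)"
  using coalg by (simp add: coalgebra_def)

lemma tevD_zero: "f \<in> dual sc \<Longrightarrow> g \<in> dual sc \<Longrightarrow> tev f g (\<Delta> 0) = 0"
  using tevD_add[of f g 0 0] add_cancel_right_right by (metis add_0)

lemma tevD_sum: "f \<in> dual sc \<Longrightarrow> g \<in> dual sc \<Longrightarrow> tev f g (\<Delta> (sum y G)) = (\<Sum>j\<in>G. tev f g (\<Delta> (y j)))"
  by (induction G rule: infinite_finite_induct) (auto simp: tevD_zero tevD_add)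

definition w :: "('c \<Rightarrow> 'k) \<Rightarrow> 'c \<Rightarrow> 'c" where
  "w f m = (\<Sum>(x, y)\<leftarrow>\<Delta> m. sc (f y) x)"

lemma w_in: assumes j: "j \<in> J" and m: "m \<in> E j" and f: "f \<in> dual sc"
  shows "w f m \<in> E j"
proof -
  obtain xs where xs: "set (map fst xs) \<subseteq> E j" "\<forall>g\<in>dual sc. \<forall>h\<in>dual sc. tev g h xs = tev g h (\<Delta> m)"
    using Esub j m unfolding rsubcomod_def by blast
  have "(\<Sum>(x, y)\<leftarrow>xs. sc (f y) x) \<in> E j" by (rule subspace_list[OF Esp[OF j] xs(1)])
  moreover have "w f m = (\<Sum>(x, y)\<leftarrow>xs. sc (f y) x)"
  proof (rule separate_eq[OF vs], intro ballI)
    fix g assume g: "g \<in> dual sc"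
    show "g (w f m) = g (\<Sum>(x, y)\<leftarrow>xs. sc (f y) x)"
      unfolding w_def dual_lin_list[OF g] using xs(2) g f by simp
  qed
  ultimately show ?thesis by simp
qed

lemma w_zero: assumes f: "f \<in> dual sc" shows "w f 0 = 0"
proof (rule separate_eq[OF vs], intro ballI)
  fix g assume g: "g \<in> dual sc"
  show "g (w f 0) = g 0" unfolding w_def dual_lin_list[OF g] using tevD_zero[OF g f] dual_zero[OF g] by simp
qed

lemma g_w: "g \<in> dual sc \<Longrightarrow> g (w f m) = conv \<Delta> g f m"
  unfolding w_def conv_def by (rule dual_lin_list)

definition dec :: "'j set \<Rightarrow> ('j \<Rightarrow> 'c) \<Rightarrow> 'c \<Rightarrow> bool" where
  "dec G y c \<longleftrightarrow> finite G \<and> G \<subseteq> J \<and> (\<forall>j\<in>G. y j \<in> E j) \<and> (\<forall>j. j \<notin> G \<longrightarrow> y j = 0) \<and> sum y G = c"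

lemma dec_ex: "\<exists>G y. dec G y c"
proof -
  have eq: "UNIV = {sum x F | F x. finite F \<and> F \<subseteq> J \<and> (\<forall>j\<in>F. x j \<in> E j)}"
    using Cdec unfolding internal_direct_sum_def by (rule conjunct1[OF conjunct2])
  have "c \<in> {sum x F | F x. finite F \<and> F \<subseteq> J \<and> (\<forall>j\<in>F. x j \<in> E j)}"
    by (subst eq[symmetric]) simp
  then obtain F x where F: "c = sum x F" "finite F" "F \<subseteq> J" "\<forall>j\<in>F. x j \<in> E j"
    by blast
  define y where "y = (\<lambda>j. if j \<in> F then x j else 0)"
  have "sum y F = c" using F(1) by (simp add: y_def)
  hence "dec F y c" using F by (simp add: dec_def y_def)
  thus ?thesis by blast
qed

lemma dec_mono: assumes d: "dec G y c" and H: "finite H" "G \<subseteq> H" "H \<subseteq> J" shows "dec H y c"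
proof -
  have d1: "finite G" "\<forall>j\<in>G. y j \<in> E j" "\<forall>j. j \<notin> G \<longrightarrow> y j = 0" "sum y G = c"
    using d by (simp_all add: dec_def)
  have "\<forall>j\<in>H. y j \<in> E j"
  proof
    fix j assume j: "j \<in> H"
    show "y j \<in> E j"
    proof (cases "j \<in> G")
      case True thus ?thesis using d1(2) by blast
    next
      case False thus ?thesis using d1(3) E0[of j] j H(3) by auto
    qed
  qed
  moreover have "sum y G = sum y H"
    by (rule sum.mono_neutral_left[OF H(1) H(2)]) (use d1(3) in blast)
  moreover have "\<forall>j. j \<notin> H \<longrightarrow> y j = 0" using d1(3) H(2) by blast
  ultimately show ?thesis unfolding dec_def using H d1(4) by simp
qed

lemma dec_unique: assumes a: "dec G y c" and b: "dec H z c" shows "y = z"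
proof -
  let ?K = "G \<union> H"
  have fK: "finite ?K" "?K \<subseteq> J" using a b by (auto simp: dec_def)
  have a': "dec ?K y c" by (rule dec_mono[OF a fK(1) _ fK(2)]) blast
  have b': "dec ?K z c" by (rule dec_mono[OF b fK(1) _ fK(2)]) blast
  have "sum (\<lambda>j. y j - z j) ?K = 0" using a' b' by (simp add: dec_def sum_subtractf)
  moreover have "\<forall>j\<in>?K. y j - z j \<in> E j" using a' b' Ediff fK(2) unfolding dec_def by blast
  ultimately have K: "\<forall>j\<in>?K. y j - z j = 0"
    using Cind[OF fK, of "\<lambda>j. y j - z j"] by blast
  have N: "\<forall>j. j \<notin> ?K \<longrightarrow> y j = z j" using a b unfolding dec_def by simp
  show ?thesis
  proof
    fix j show "y j = z j" using K N by (cases "j \<in> ?K") auto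
  qed
qed

definition comp :: "'c \<Rightarrow> 'j \<Rightarrow> 'c" where
  "comp c = (SOME y. \<exists>G. dec G y c)"

lemma dec_comp: "dec G y c \<Longrightarrow> y = comp c"
proof -
  assume a: "dec G y c"
  have "\<exists>G. dec G (comp c) c" using someI_ex[of "\<lambda>y. \<exists>G. dec G y c"] a unfolding comp_def by blast
  thus ?thesis using dec_unique a by blast
qed

lemma dec_add: "dec G y a \<Longrightarrow> dec H z b \<Longrightarrow> dec (G \<union> H) (\<lambda>j. y j + z j) (a + b)"
proof -
  assume a: "dec G y a" and b: "dec H z b"
  have fK: "finite (G \<union> H)" "G \<union> H \<subseteq> J" using a b by (auto simp: dec_def)
  have a': "dec (G \<union> H) y a" by (rule dec_mono[OF a fK(1) _ fK(2)]) blast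
  have b': "dec (G \<union> H) z b" by (rule dec_mono[OF b fK(1) _ fK(2)]) blast
  show ?thesis using a' b' Eadd fK by (auto simp: dec_def sum.distrib)
qed

lemma dec_scale: "dec G y a \<Longrightarrow> dec G (\<lambda>j. sc k (y j)) (sc k a)"
proof -
  interpret vector_space sc by (rule vs)
  assume a: "dec G y a"
  show ?thesis using a Escale by (auto simp: dec_def scale_sum_right)
qed

lemma dec_single: "j \<in> J \<Longrightarrow> m \<in> E j \<Longrightarrow> dec {j} (\<lambda>i. if i = j then m else 0) m"
  by (auto simp: dec_def)

abbreviation "PD \<equiv> prod_dual sc E J0"

lemma pd_zero: "\<psi> \<in> PD \<Longrightarrow> \<psi> j 0 = 0"
proof -
  assume p: "\<psi> \<in> PD"
  show ?thesis
  proof (cases "j \<in> J0")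
    case True
    have e: "\<psi> j \<in> Edual sc (E j)" using p True by (simp add: prod_dual_def)
    have z: "0 \<in> E j" using E0 J0J True by auto
    have "\<psi> j (0 + 0) = \<psi> j 0 + \<psi> j 0" using e z unfolding Edual_def by blast
    thus ?thesis by (metis add_0 add_cancel_right_right)
  next
    case False thus ?thesis using p by (simp add: prod_dual_def)
  qed
qed

lemma pd_add: "\<psi> \<in> PD \<Longrightarrow> x \<in> E j \<Longrightarrow> y \<in> E j \<Longrightarrow> \<psi> j (x + y) = \<psi> j x + \<psi> j y"
  by (cases "j \<in> J0") (auto simp: prod_dual_def Edual_def)

lemma pd_scale: "\<psi> \<in> PD \<Longrightarrow> x \<in> E j \<Longrightarrow> \<psi> j (sc a x) = a * \<psi> j x"
  by (cases "j \<in> J0") (auto simp: prod_dual_def Edual_def)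

definition glue :: "('j \<Rightarrow> 'c \<Rightarrow> 'k) \<Rightarrow> 'c \<Rightarrow> 'k" where
  "glue \<psi> c = (\<Sum>j\<in>{j. comp c j \<noteq> 0}. \<psi> j (comp c j))"

lemma glue_dec: assumes d: "dec G y c" and z: "\<psi> \<in> {\<psi>. \<forall>j. \<psi> j 0 = 0}"
  shows "glue \<psi> c = (\<Sum>j\<in>G. \<psi> j (y j))"
proof -
  have y: "y = comp c" by (rule dec_comp[OF d])
  have z': "\<forall>j. \<psi> j 0 = 0" using z by simp
  have "{j. y j \<noteq> 0} \<subseteq> G" "finite G" using d by (auto simp: dec_def)
  hence "(\<Sum>j\<in>{j. y j \<noteq> 0}. \<psi> j (y j)) = (\<Sum>j\<in>G. \<psi> j (y j))"
    by (intro sum.mono_neutral_left) (auto simp: z')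
  thus ?thesis unfolding glue_def y by simp
qed

lemma pd_z: "\<psi> \<in> PD \<Longrightarrow> \<psi> \<in> {\<psi>. \<forall>j. \<psi> j 0 = 0}" using pd_zero by blast

lemma glue_dual: assumes p: "\<psi> \<in> PD" shows "glue \<psi> \<in> dual sc"
  unfolding dual_def
proof (intro CollectI conjI allI)
  fix a b
  obtain G y where y: "dec G y a" using dec_ex by blast
  obtain H z where z: "dec H z b" using dec_ex by blast
  have fK: "finite (G \<union> H)" "G \<union> H \<subseteq> J" using y z by (auto simp: dec_def)
  have y': "dec (G \<union> H) y a" by (rule dec_mono[OF y fK(1) _ fK(2)]) blast
  have z': "dec (G \<union> H) z b" by (rule dec_mono[OF z fK(1) _ fK(2)]) blast
  have "glue \<psi> (a + b) = (\<Sum>j\<in>G \<union> H. \<psi> j (y j + z j))"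
    using glue_dec[OF dec_add[OF y z] pd_z[OF p]] .
  also have "\<dots> = (\<Sum>j\<in>G \<union> H. \<psi> j (y j)) + (\<Sum>j\<in>G \<union> H. \<psi> j (z j))"
    using y' z' pd_add[OF p] by (simp add: dec_def sum.distrib[symmetric])
  also have "\<dots> = glue \<psi> a + glue \<psi> b"
    using glue_dec[OF y' pd_z[OF p]] glue_dec[OF z' pd_z[OF p]] by simp
  finally show "glue \<psi> (a + b) = glue \<psi> a + glue \<psi> b" .
next
  fix k a
  obtain G y where y: "dec G y a" using dec_ex by blast
  have "glue \<psi> (sc k a) = (\<Sum>j\<in>G. \<psi> j (sc k (y j)))"
    using glue_dec[OF dec_scale[OF y] pd_z[OF p]] .
  also have "\<dots> = (\<Sum>j\<in>G. k * \<psi> j (y j))"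
    using y pd_scale[OF p] by (simp add: dec_def)
  also have "\<dots> = k * glue \<psi> a"
    using glue_dec[OF y pd_z[OF p]] by (simp add: sum_distrib_left)
  finally show "glue \<psi> (sc k a) = k * glue \<psi> a" .
qed

lemma glue_zero: "glue 0 = 0"
  by (rule ext) (simp add: glue_def)

lemma glue_add: "glue (\<psi>1 + \<psi>2) = glue \<psi>1 + glue \<psi>2"
  by (rule ext) (simp add: glue_def sum.distrib)

lemma glue_scale: "glue (pscale a \<psi>) = fscale a (glue \<psi>)"
  by (rule ext) (simp add: glue_def pscale_def fscale_def sum_distrib_left)

lemma pa_z: assumes p: "\<psi> \<in> PD" and f: "f \<in> dual sc" shows "prod_act sc \<Delta> E \<psi> f \<in> {\<psi>. \<forall>j. \<psi> j 0 = 0}"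
  using w_zero[OF f] pd_zero[OF p] unfolding prod_act_def Edual_act_def w_def by simp

lemma glue_act: assumes p: "\<psi> \<in> PD" and f: "f \<in> dual sc"
  shows "glue (prod_act sc \<Delta> E \<psi> f) = conv \<Delta> (glue \<psi>) f"
proof (rule ext)
  fix c
  obtain G y where y: "dec G y c" using dec_ex by blast
  have GJ: "\<forall>j\<in>G. j \<in> J \<and> y j \<in> E j" using y by (auto simp: dec_def)
  have "glue (prod_act sc \<Delta> E \<psi> f) c = (\<Sum>j\<in>G. prod_act sc \<Delta> E \<psi> f j (y j))"
    by (rule glue_dec[OF y pa_z[OF p f]])
  also have "\<dots> = (\<Sum>j\<in>G. \<psi> j (w f (y j)))"
    using GJ by (intro sum.cong) (auto simp: prod_act_def Edual_act_def w_def)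
  also have "\<dots> = (\<Sum>j\<in>G. glue \<psi> (w f (y j)))"
  proof (intro sum.cong refl)
    fix j assume j: "j \<in> G"
    have d: "dec {j} (\<lambda>i. if i = j then w f (y j) else 0) (w f (y j))"
      using dec_single GJ j w_in f by blast
    show "\<psi> j (w f (y j)) = glue \<psi> (w f (y j))"
      using glue_dec[OF d pd_z[OF p]] by simp
  qed
  also have "\<dots> = (\<Sum>j\<in>G. conv \<Delta> (glue \<psi>) f (y j))"
    using g_w[OF glue_dual[OF p]] by simp
  also have "\<dots> = conv \<Delta> (glue \<psi>) f c"
    using tevD_sum[OF glue_dual[OF p] f, of y G] y unfolding conv_def dec_def by simp
  finally show "glue (prod_act sc \<Delta> E \<psi> f) c = conv \<Delta> (glue \<psi>) f c" .
qed

definition rho :: "'j \<Rightarrow> ('c \<Rightarrow> 'k) \<Rightarrow> 'c \<Rightarrow> 'k" where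
  "rho j \<phi> = (\<lambda>x. if x \<in> E j then \<phi> x else 0)"

definition r :: "('c \<Rightarrow> 'k) \<Rightarrow> 'j \<Rightarrow> 'c \<Rightarrow> 'k" where
  "r \<phi> = (\<lambda>j. if j \<in> J0 then rho j \<phi> else 0)"

lemma rho_act: assumes j: "j \<in> J" and \<phi>: "\<phi> \<in> dual sc" and f: "f \<in> dual sc"
  shows "rho j (conv \<Delta> \<phi> f) = Edual_act sc \<Delta> (E j) (rho j \<phi>) f"
proof (rule ext)
  fix m
  show "rho j (conv \<Delta> \<phi> f) m = Edual_act sc \<Delta> (E j) (rho j \<phi>) f m"
    using w_in[OF j _ f] g_w[OF \<phi>] unfolding rho_def Edual_act_def w_def by auto
qed

lemma rho_dual: "j \<in> J \<Longrightarrow> \<phi> \<in> dual sc \<Longrightarrow> rho j \<phi> \<in> Edual sc (E j)"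
  unfolding Edual_def rho_def using Eadd Escale by (auto simp: dual_add dual_scale)

lemma r_act: assumes \<phi>: "\<phi> \<in> dual sc" and f: "f \<in> dual sc"
  shows "r (conv \<Delta> \<phi> f) = prod_act sc \<Delta> E (r \<phi>) f"
  unfolding r_def prod_act_def using rho_act[OF _ \<phi> f] J0J
  by (intro ext) (auto simp: Edual_act_def)

lemma r_add: "r (\<phi> + \<phi>') = r \<phi> + r \<phi>'"
  by (intro ext) (simp add: r_def rho_def)

lemma r_scale: "r (fscale a \<phi>) = pscale a (r \<phi>)"
  by (intro ext) (simp add: r_def rho_def fscale_def pscale_def)

lemma r_zero: "r 0 = 0"
  by (intro ext) (simp add: r_def rho_def)

lemma r_PD: "\<phi> \<in> dual sc \<Longrightarrow> r \<phi> \<in> PD"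
  unfolding prod_dual_def r_def using rho_dual J0J by auto

lemma r_glue: assumes p: "\<psi> \<in> PD" shows "r (glue \<psi>) = \<psi>"
proof (intro ext)
  fix j x
  show "r (glue \<psi>) j x = \<psi> j x"
  proof (cases "j \<in> J0")
    case True
    hence j: "j \<in> J" using J0J by auto
    show ?thesis
    proof (cases "x \<in> E j")
      case True
      have d: "dec {j} (\<lambda>i. if i = j then x else 0) x" using dec_single j True by blast
      show ?thesis using glue_dec[OF d pd_z[OF p]] True \<open>j \<in> J0\<close> by (simp add: r_def rho_def)
    next
      case False thus ?thesis using p \<open>j \<in> J0\<close> by (simp add: r_def rho_def prod_dual_def Edual_def)
    qed
  next
    case False thus ?thesis using p by (simp add: r_def prod_dual_def)
  qed
qed

abbreviation "RC \<equiv> Rat sc fscale (conv \<Delta>) (dual sc)"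
abbreviation "RP \<equiv> Rat sc pscale (prod_act sc \<Delta> E) PD"

lemma RC_dual: "\<phi> \<in> RC \<Longrightarrow> \<phi> \<in> dual sc"
  unfolding Rat_def by auto

lemma rho_vanish: assumes \<phi>: "\<phi> \<in> RC" and j: "j \<in> J" "j \<notin> J0" shows "rho j \<phi> = 0"
proof -
  obtain M where M: "M \<subseteq> dual sc" "rational_submod sc fscale (conv \<Delta>) M" "\<phi> \<in> M"
    using \<phi> unfolding Rat_def by blast
  have h0: "rho j 0 = 0" by (simp add: rho_def fun_eq_iff)
  have ha: "\<forall>x\<in>M. \<forall>y\<in>M. rho j (x + y) = rho j x + rho j y" by (simp add: rho_def fun_eq_iff)
  have hs: "\<forall>a. \<forall>x\<in>M. rho j (fscale a x) = fscale a (rho j x)" by (simp add: rho_def fscale_def fun_eq_iff)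
  have hact: "\<forall>x\<in>M. \<forall>f\<in>dual sc. rho j (conv \<Delta> x f) = Edual_act sc \<Delta> (E j) (rho j x) f"
    using M(1) rho_act[OF j(1)] by blast
  have "rational_submod sc fscale (Edual_act sc \<Delta> (E j)) (rho j ` M)"
    by (rule rat_image[OF M(2) h0 ha hs hact])
  moreover have "rho j ` M \<subseteq> Edual sc (E j)" using rho_dual[OF j(1)] M(1) by auto
  ultimately have "rho j \<phi> \<in> Rat sc fscale (Edual_act sc \<Delta> (E j)) (Edual sc (E j))"
    using M(3) unfolding Rat_def by blast
  thus ?thesis using J0R j by auto
qed

lemma r_inj: "inj_on r RC"
proof (rule inj_onI)
  fix \<phi> \<phi>' assume a: "\<phi> \<in> RC" "\<phi>' \<in> RC" "r \<phi> = r \<phi>'"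
  show "\<phi> = \<phi>'"
  proof (rule ext)
    fix c
    obtain G y where y: "dec G y c" using dec_ex by blast
    have "\<phi> (y j) = \<phi>' (y j)" if j: "j \<in> G" for j
    proof -
      have jJ: "j \<in> J" "y j \<in> E j" using y j by (auto simp: dec_def)
      have "rho j \<phi> = rho j \<phi>'"
      proof (cases "j \<in> J0")
        case True thus ?thesis using a(3) unfolding r_def by meson
      next
        case False thus ?thesis using rho_vanish a jJ by simp
      qed
      thus ?thesis using jJ unfolding rho_def by meson
    qed
    hence e: "(\<Sum>j\<in>G. \<phi> (y j)) = (\<Sum>j\<in>G. \<phi>' (y j))" by (rule sum.cong[OF refl])
    have c: "c = sum y G" using y by (simp add: dec_def)
    show "\<phi> c = \<phi>' c"
      unfolding c dual_sum[OF RC_dual[OF a(1)]] dual_sum[OF RC_dual[OF a(2)]] by (rule e)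
  qed
qed

lemma r_image: "r ` RC = RP"
proof
  show "r ` RC \<subseteq> RP"
  proof
    fix \<chi> assume "\<chi> \<in> r ` RC"
    then obtain \<phi> where \<phi>: "\<phi> \<in> RC" "\<chi> = r \<phi>" by auto
    obtain M where M: "M \<subseteq> dual sc" "rational_submod sc fscale (conv \<Delta>) M" "\<phi> \<in> M"
      using \<phi> unfolding Rat_def by blast
    have ha: "\<forall>x\<in>M. \<forall>y\<in>M. r (x + y) = r x + r y" using r_add by blast
    have hs: "\<forall>a. \<forall>x\<in>M. r (fscale a x) = pscale a (r x)" using r_scale by blast
    have hact: "\<forall>x\<in>M. \<forall>f\<in>dual sc. r (conv \<Delta> x f) = prod_act sc \<Delta> E (r x) f"
      using M(1) r_act by blast
    have "rational_submod sc pscale (prod_act sc \<Delta> E) (r ` M)"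
      by (rule rat_image[OF M(2) r_zero ha hs hact])
    moreover have "r ` M \<subseteq> PD" using r_PD M(1) by auto
    ultimately show "\<chi> \<in> RP" using M(3) \<phi> unfolding Rat_def by blast
  qed
next
  show "RP \<subseteq> r ` RC"
  proof
    fix \<psi> assume \<psi>: "\<psi> \<in> RP"
    obtain M where M: "M \<subseteq> PD" "rational_submod sc pscale (prod_act sc \<Delta> E) M" "\<psi> \<in> M"
      using \<psi> unfolding Rat_def by blast
    have ha: "\<forall>x\<in>M. \<forall>y\<in>M. glue (x + y) = glue x + glue y" using glue_add by blast
    have hs: "\<forall>a. \<forall>x\<in>M. glue (pscale a x) = fscale a (glue x)" using glue_scale by blast
    have hact: "\<forall>x\<in>M. \<forall>f\<in>dual sc. glue (prod_act sc \<Delta> E x f) = conv \<Delta> (glue x) f"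
      using M(1) glue_act by blast
    have "rational_submod sc fscale (conv \<Delta>) (glue ` M)"
      by (rule rat_image[OF M(2) glue_zero ha hs hact])
    moreover have "glue ` M \<subseteq> dual sc" using glue_dual M(1) by auto
    ultimately have "glue \<psi> \<in> RC" using M(3) unfolding Rat_def by blast
    moreover have "r (glue \<psi>) = \<psi>" using r_glue M by auto
    ultimately show "\<psi> \<in> r ` RC" by (metis image_eqI)
  qed
qed

end


theorem corollary2p2:
  fixes sc :: "'k::field \<Rightarrow> 'c::ab_group_add \<Rightarrow> 'c"
    and \<Delta> :: "'c \<Rightarrow> ('c \<times> 'c) list"
    and \<epsilon> :: "'c \<Rightarrow> 'k"
    and J :: "'j set"
    and T E :: "'j \<Rightarrow> 'c set"
  assumes coalg: "coalgebra sc \<Delta> \<epsilon>"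
    and T_simple: "\<forall>j\<in>J. simple_rsubcomod sc \<Delta> (T j)"
    and socle: "internal_direct_sum sc J T (rsocle sc \<Delta>)"
    and E_env: "\<forall>j\<in>J. rsubcomod sc \<Delta> (E j) \<and> T j \<subseteq> E j \<and> essential_rsub sc \<Delta> (T j) (E j)"
    and C_decomp: "internal_direct_sum sc J E UNIV"
    and iso: "rmod_iso sc sc UNIV (C_ract sc \<Delta>) fscale (Rat sc fscale (conv \<Delta>) (dual sc)) (conv \<Delta>)"
  shows "rmod_iso sc sc UNIV (C_ract sc \<Delta>)
           pscale
           (Rat sc pscale (prod_act sc \<Delta> E)
              (prod_dual sc E {j \<in> J. Rat sc fscale (Edual_act sc \<Delta> (E j)) (Edual sc (E j)) \<noteq> {0}}))
           (prod_act sc \<Delta> E)"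
proof -
  let ?J0 = "{j \<in> J. Rat sc fscale (Edual_act sc \<Delta> (E j)) (Edual sc (E j)) \<noteq> {0}}"
  have Esub: "\<forall>j\<in>J. rsubcomod sc \<Delta> (E j)" using E_env by blast
  interpret cs sc \<Delta> \<epsilon> J E ?J0
    by (unfold_locales) (use coalg Esub C_decomp in auto)
  obtain \<psi>0 where p0: "bij_betw \<psi>0 UNIV RC"
      "\<forall>x\<in>UNIV. \<forall>y\<in>UNIV. \<psi>0 (x + y) = \<psi>0 x + \<psi>0 y"
      "\<forall>a. \<forall>x\<in>UNIV. \<psi>0 (sc a x) = fscale a (\<psi>0 x)"
      "\<forall>x\<in>UNIV. \<forall>f\<in>dual sc. \<psi>0 (C_ract sc \<Delta> x f) = conv \<Delta> (\<psi>0 x) f"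
    using iso unfolding rmod_iso_def by blast
  have rng: "\<psi>0 x \<in> RC" for x using p0(1) bij_betwE by blast
  have br: "bij_betw r RC RP" using r_inj r_image by (simp add: bij_betw_def)
  have b: "bij_betw (r \<circ> \<psi>0) UNIV RP" by (rule bij_betw_trans[OF p0(1) br])
  show ?thesis
    unfolding rmod_iso_def
  proof (intro exI[of _ "r \<circ> \<psi>0"] conjI ballI allI)
    show "bij_betw (r \<circ> \<psi>0) UNIV RP" by (rule b)
    show "(r \<circ> \<psi>0) (x + y) = (r \<circ> \<psi>0) x + (r \<circ> \<psi>0) y" for x y
      using p0(2) r_add by simp
    show "(r \<circ> \<psi>0) (sc a x) = pscale a ((r \<circ> \<psi>0) x)" for a x
      using p0(3) r_scale by simp
    show "(r \<circ> \<psi>0) (C_ract sc \<Delta> x f) = prod_act sc \<Delta> E ((r \<circ> \<psi>0) x) f" if f: "f \<in> dual sc" for x f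
      using p0(4) r_act[OF RC_dual[OF rng] f] f by simp
  qed
qed

end
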